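(* Let $n\ge27$, $\mathcal{X},\mathcal{Y}$ finite with $|\mathcal{X}|,|\mathcal{Y}|\ge2$, and $\mathbf{X}$ a random vector on $\mathcal{X}^n$. Let $w,\tilde w\in\mathcal{P}(\mathcal{Y}|\mathcal{X})$. For every discrete random variable $U$ such that $U,\mathbf{X}$ are jointly distributed (with channel outputs generated from $\mathbf{X}$ alone), every $u$ in the support of $U$, and every $\mathbf{y}\in\mathcal{Y}^n$ with $\tilde w_n(\mathbf{y}|u)>0$, $$\log_2\frac{w_n(\mathbf{y}|u)}{\tilde w_n(\mathbf{y}|u)}\le n\sup_{\hat w\in\mathcal{P}(\mathcal{Y}|\mathcal{X}),\ \hat p\in\mathcal{P}(\mathcal{X})}\mathbb{D}_{\hat w}(w\|\tilde w|\hat p)+2|\mathcal{X}||\mathcal{Y}|\log_2 n.$$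
   Context: $\mathcal{P}(\mathcal{Y}|\mathcal{X})$ is the set of conditional distributions from $\mathcal{X}$ to $\mathcal{Y}$ and $\mathcal{P}(\mathcal{X})$ the set of distributions on $\mathcal{X}$. $w_n(\mathbf{y}|u)=\sum_{\mathbf{x}}w^n(\mathbf{y}|\mathbf{x})p_{\mathbf{X}|U}(\mathbf{x}|u)$ with $w^n(\mathbf{y}|\mathbf{x})=\prod_t w(y_t|x_t)$, and similarly $\tilde w_n$. $\mathbb{D}_{\hat w}(w\|\tilde w|\hat p)=\sum_{y,x}\hat w(y|x)\hat p(x)\log_2\frac{w(y|x)}{\tilde w(y|x)}$. *)

theory Defs
  imports "HOL-Probability.Probability"
begin

text \<open>Conditional distributions from 'x to 'y (channels), as w x y = w(y|x).\<close>
definition cond_dists :: "('x::finite \<Rightarrow> 'y::finite \<Rightarrow> real) set" where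
  "cond_dists = {w. (\<forall>x y. 0 \<le> w x y) \<and> (\<forall>x. (\<Sum>y\<in>UNIV. w x y) = 1)}"

definition dists :: "('x::finite \<Rightarrow> real) set" where
  "dists = {p. (\<forall>x. 0 \<le> p x) \<and> (\<Sum>x\<in>UNIV. p x) = 1}"

definition llr :: "real \<Rightarrow> real \<Rightarrow> ereal" where
  "llr a b = (if 0 < a \<and> 0 < b then ereal (log 2 (a / b))
              else if 0 < a then \<infinity> else if 0 < b then -\<infinity> else 0)"

definition prod_chan :: "('x \<Rightarrow> 'y \<Rightarrow> real) \<Rightarrow> nat \<Rightarrow> 'x list \<Rightarrow> 'y list \<Rightarrow> real" where
  "prod_chan w n xs ys = (\<Prod>t<n. w (xs ! t) (ys ! t))"

definition cond_pmf :: "('u \<times> 'x list) pmf \<Rightarrow> 'u \<Rightarrow> 'x list \<Rightarrow> real" where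
  "cond_pmf P u xs = pmf P (u, xs) / pmf (map_pmf fst P) u"

definition chan_n :: "('x::finite \<Rightarrow> 'y \<Rightarrow> real) \<Rightarrow> nat \<Rightarrow> ('u \<times> 'x list) pmf \<Rightarrow> 'u \<Rightarrow> 'y list \<Rightarrow> real" where
  "chan_n w n P u ys = (\<Sum>xs\<in>{xs. length xs = n}. prod_chan w n xs ys * cond_pmf P u xs)"

text \<open>D_{what}(w || wt | phat) = sum_{y,x} what(y|x) phat(x) log2 (w(y|x)/wt(y|x)),
  with the convention 0 * (+-inf) = 0.\<close>
definition cond_div :: "('x::finite \<Rightarrow> 'y::finite \<Rightarrow> real) \<Rightarrow> ('x \<Rightarrow> 'y \<Rightarrow> real) \<Rightarrow>
    ('x \<Rightarrow> 'y \<Rightarrow> real) \<Rightarrow> ('x \<Rightarrow> real) \<Rightarrow> ereal" where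
  "cond_div what w wt phat = (\<Sum>y\<in>UNIV. \<Sum>x\<in>UNIV. ereal (what x y * phat x) * llr (w x y) (wt x y))"

end

theory Submission
  imports Defs
begin

lemma point_le_sup:
  fixes w wt :: "'x::finite \<Rightarrow> 'y::finite \<Rightarrow> real"
  shows "llr (w x y) (wt x y) \<le> (SUP (what, phat) \<in> cond_dists \<times> dists. cond_div what w wt phat)"
proof -
  define wh :: "'x \<Rightarrow> 'y \<Rightarrow> real" where "wh = (\<lambda>x' y'. if y' = y then 1 else 0)"
  define ph :: "'x \<Rightarrow> real" where "ph = (\<lambda>x'. if x' = x then 1 else 0)"
  have wh: "wh \<in> cond_dists" unfolding cond_dists_def wh_def by simp
  have ph: "ph \<in> dists" unfolding dists_def ph_def by simp
  have "cond_div wh w wt ph = (\<Sum>y'\<in>UNIV. \<Sum>x'\<in>UNIV.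
      (if y' = y then (if x' = x then llr (w x y) (wt x y) else 0) else 0))"
    unfolding cond_div_def wh_def ph_def
    by (intro sum.cong refl) (auto simp: zero_ereal_def[symmetric] one_ereal_def[symmetric])
  also have "\<dots> = (\<Sum>y'\<in>UNIV. (if y' = y then llr (w x y) (wt x y) else 0))"
    by (intro sum.cong refl) (simp add: sum.delta)
  also have "\<dots> = llr (w x y) (wt x y)" by (simp add: sum.delta)
  finally have eq: "cond_div wh w wt ph = llr (w x y) (wt x y)" .
  have "cond_div wh w wt ph \<le> (SUP (what, phat) \<in> cond_dists \<times> dists. cond_div what w wt phat)"
    by (rule SUP_upper2[of "(wh, ph)"]) (use wh ph in auto)
  then show ?thesis using eq by simp
qed

theorem lemma31:
  fixes n :: nat
    and w wt :: "'x::finite \<Rightarrow> 'y::finite \<Rightarrow> real"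
    and P :: "('u \<times> 'x list) pmf"
    and u :: 'u
    and ys :: "'y list"
  assumes "n \<ge> 27"
    and "CARD('x) \<ge> 2" and "CARD('y) \<ge> 2"
    and "w \<in> cond_dists" and "wt \<in> cond_dists"
    and "\<forall>p\<in>set_pmf P. length (snd p) = n"
    and "u \<in> set_pmf (map_pmf fst P)"
    and "length ys = n"
    and "chan_n wt n P u ys > 0"
  shows "llr (chan_n w n P u ys) (chan_n wt n P u ys)
         \<le> ereal (real n) * (SUP (what, phat) \<in> cond_dists \<times> dists. cond_div what w wt phat)
           + ereal (2 * real CARD('x) * real CARD('y) * log 2 (real n))"
proof -
  define S where "S = (SUP (what, phat) \<in> cond_dists \<times> dists. cond_div what w wt phat)"
  define c where "c = 2 * real CARD('x) * real CARD('y) * log 2 (real n)"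
  have c0: "c \<ge> 0" unfolding c_def using assms(1) by simp
  have wn: "\<And>x y. w x y \<ge> 0" and wtn: "\<And>x y. wt x y \<ge> 0"
    using assms(4,5) unfolding cond_dists_def by auto
  have pt: "\<And>x y. llr (w x y) (wt x y) \<le> S" unfolding S_def by (rule point_le_sup)
  show ?thesis
  proof (cases "\<exists>x y. w x y > 0 \<and> wt x y \<le> 0")
    case True
    then obtain x y where "w x y > 0" "wt x y \<le> 0" by blast
    then have "llr (w x y) (wt x y) = \<infinity>" unfolding llr_def by auto
    with pt[of x y] have "S = \<infinity>" by simp
    moreover have "ereal (real n) > 0" using assms(1) by simp
    ultimately show ?thesis unfolding S_def[symmetric] by simp
  next
    case False
    then have pos: "\<And>x y. w x y > 0 \<Longrightarrow> wt x y > 0" by force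
    define A where "A = {log 2 (w x y / wt x y) | x y. w x y > 0}"
    have finA: "finite A"
    proof -
      have "A \<subseteq> (\<lambda>(x,y). log 2 (w x y / wt x y)) ` UNIV" unfolding A_def by auto
      then show ?thesis by (rule finite_subset) simp
    qed
    obtain x0 :: 'x where True by simp
    have "(\<Sum>y\<in>UNIV. w x0 y) = 1" using assms(4) unfolding cond_dists_def by auto
    then obtain y0 where "w x0 y0 > 0"
      by (metis (no_types, lifting) less_eq_real_def sum_nonneg_eq_0_iff finite zero_neq_one wn iso_tuple_UNIV_I)
    then have neA: "A \<noteq> {}" unfolding A_def by auto
    define K where "K = Max A"
    have KS: "ereal K \<le> S"
    proof -
      have "K \<in> A" unfolding K_def using finA neA by simp
      then obtain x y where "K = log 2 (w x y / wt x y)" "w x y > 0" unfolding A_def by auto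
      with pt[of x y] pos[of x y] show ?thesis unfolding llr_def by simp
    qed
    have bnd: "w x y \<le> 2 powr K * wt x y" for x y
    proof (cases "w x y > 0")
      case True
      have "log 2 (w x y / wt x y) \<in> A" unfolding A_def using True by auto
      then have "log 2 (w x y / wt x y) \<le> K" unfolding K_def using finA by simp
      moreover have "w x y / wt x y > 0" using True pos[OF True] by simp
      ultimately have "w x y / wt x y \<le> 2 powr K"
        by (metis less_log_iff not_le one_less_numeral_iff semiring_norm(76) zero_less_numeral)
      then show ?thesis using pos[OF True] by (simp add: divide_le_eq mult.commute)
    next
      case False
      then show ?thesis using wn[of x y] wtn[of x y] by simp
    qed
    define C where "C = (2 powr K) ^ n"
    have C0: "C > 0" unfolding C_def by simp
    have pc: "prod_chan w n xs ys \<le> C * prod_chan wt n xs ys" for xs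
    proof -
      have "prod_chan w n xs ys \<le> (\<Prod>t<n. 2 powr K * wt (xs ! t) (ys ! t))"
        unfolding prod_chan_def by (rule prod_mono) (use wn bnd in auto)
      also have "\<dots> = C * prod_chan wt n xs ys"
        unfolding prod_chan_def C_def by (simp add: prod.distrib)
      finally show ?thesis .
    qed
    have cp0: "cond_pmf P u xs \<ge> 0" for xs unfolding cond_pmf_def by simp
    have "chan_n w n P u ys \<le> (\<Sum>xs\<in>{xs. length xs = n}. C * prod_chan wt n xs ys * cond_pmf P u xs)"
      unfolding chan_n_def by (rule sum_mono) (use pc cp0 in \<open>auto intro: mult_right_mono\<close>)
    also have "\<dots> = C * chan_n wt n P u ys"
      unfolding chan_n_def by (simp add: sum_distrib_left mult.assoc)
    finally have cn: "chan_n w n P u ys \<le> C * chan_n wt n P u ys" .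
    have L: "llr (chan_n w n P u ys) (chan_n wt n P u ys) \<le> ereal (real n * K)"
    proof (cases "chan_n w n P u ys > 0")
      case True
      have "chan_n w n P u ys / chan_n wt n P u ys \<le> C"
        using cn assms(9) by (simp add: divide_le_eq mult.commute)
      then have "log 2 (chan_n w n P u ys / chan_n wt n P u ys) \<le> log 2 C"
        using True assms(9) by (intro log_mono) auto
      also have "log 2 C = real n * K" unfolding C_def
        by (simp add: log_nat_power)
      finally show ?thesis using True assms(9) unfolding llr_def by simp
    next
      case False
      then show ?thesis using assms(9) unfolding llr_def by simp
    qed
    have "ereal (real n * K) = ereal (real n) * ereal K" by simp
    also have "\<dots> \<le> ereal (real n) * S" by (rule ereal_mult_left_mono[OF KS]) simp
    also have "\<dots> \<le> ereal (real n) * S + ereal c" using c0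
      by (metis add_left_mono add.right_neutral ereal_less_eq(5) zero_ereal_def)
    finally show ?thesis using L unfolding S_def c_def by simp
  qed
qed

end
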